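(* Let $(G,G^+)$ be a simple Riesz group, and let $I=(q_i)_{i\ge1}$ be an increasing sequence of non-negative integers with $\gcd(q_i,q_j)=1$ for all $i\neq j$. Suppose that for every $i$ there is a countably generated interval $D_i$ in $G^+$ with $tD_i\neq G^+$ for every positive integer $t\le q_i-1$ and $q_iD_i=G^+$. Then there exists a sequence $(X_i)_{i\ge1}$ of countably generated intervals in $G^+$, descending in the algebraic ordering of the monoid of countably generated intervals (i.e. for each $i$ there is a countably generated interval $Y_i$ with $X_{i+1}+Y_i=X_i$), such that $tX_i\neq G^+$ for every positive integer $t\le q_i-1$ and $\left(\prod_{j=1}^i q_j\right)X_i=G^+$.
   Context: $(G,G^+)$ partially ordered abelian group; simple: $G\neq0$ and every nonzero element of $G^+$ is an order-unit. Riesz group: $x\le y_1+y_2$ in $G^+$ implies $x=x_1+x_2$ with $x_j\in G^+$, $x_j\le y_j$. An interval in $G^+$ is a nonempty, upward directed, order-hereditary subset of $G^+$; countably generated if it has a countable cofinal subset. Intervals form a monoid with $X+Y=\{z\in G^+: z\le x+y,\ x\in X,\ y\in Y\}$; $tX$ is the $t$-fold sum. *)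

theory Defs
  imports Main "HOL-Library.Countable_Set"
begin

definition pos_cone :: "'a::ordered_ab_group_add set" where
  "pos_cone = {x. 0 \<le> x}"

definition nsmul :: "nat \<Rightarrow> 'a::ab_group_add \<Rightarrow> 'a" where
  "nsmul n u = (\<Sum>_<n. u)"

definition order_unit :: "'a::ordered_ab_group_add \<Rightarrow> bool" where
  "order_unit u \<longleftrightarrow> 0 \<le> u \<and> (\<forall>x. \<exists>n. x \<le> nsmul n u)"

definition simple_group :: "'a::ordered_ab_group_add itself \<Rightarrow> bool" where
  "simple_group _ \<longleftrightarrow> (\<exists>x::'a. x \<noteq> 0) \<and>
     (\<forall>u::'a. 0 \<le> u \<and> u \<noteq> 0 \<longrightarrow> order_unit u)"

definition riesz_group :: "'a::ordered_ab_group_add itself \<Rightarrow> bool" where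
  "riesz_group _ \<longleftrightarrow> (\<forall>x y1 y2::'a. 0 \<le> x \<and> 0 \<le> y1 \<and> 0 \<le> y2 \<and> x \<le> y1 + y2 \<longrightarrow>
     (\<exists>x1 x2. x = x1 + x2 \<and> 0 \<le> x1 \<and> 0 \<le> x2 \<and> x1 \<le> y1 \<and> x2 \<le> y2))"

definition is_interval :: "'a::ordered_ab_group_add set \<Rightarrow> bool" where
  "is_interval X \<longleftrightarrow> X \<subseteq> pos_cone \<and> X \<noteq> {} \<and>
     (\<forall>x\<in>X. \<forall>y\<in>X. \<exists>z\<in>X. x \<le> z \<and> y \<le> z) \<and>
     (\<forall>x\<in>X. \<forall>z. 0 \<le> z \<and> z \<le> x \<longrightarrow> z \<in> X)"

definition cg_interval :: "'a::ordered_ab_group_add set \<Rightarrow> bool" where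
  "cg_interval X \<longleftrightarrow> is_interval X \<and>
     (\<exists>C. countable C \<and> C \<subseteq> X \<and> (\<forall>x\<in>X. \<exists>c\<in>C. x \<le> c))"

definition interval_add :: "'a::ordered_ab_group_add set \<Rightarrow> 'a set \<Rightarrow> 'a set" where
  "interval_add X Y = {z. 0 \<le> z \<and> (\<exists>x\<in>X. \<exists>y\<in>Y. z \<le> x + y)}"

text \<open>t-fold sum tX (0X is the zero interval {0}; only t >= 1 is used).\<close>
fun interval_mult :: "nat \<Rightarrow> 'a::ordered_ab_group_add set \<Rightarrow> 'a set" where
  "interval_mult 0 X = {0}"
| "interval_mult (Suc 0) X = X"
| "interval_mult (Suc (Suc n)) X = interval_add (interval_mult (Suc n) X) X"

end

theory Submission
  imports Defs
begin

lemma nsmul_0[simp]: "nsmul 0 u = 0" by (simp add: nsmul_def)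
lemma nsmul_Suc: "nsmul (Suc n) u = nsmul n u + u" by (simp add: nsmul_def)
lemma nsmul_1[simp]: "nsmul 1 u = u" by (simp add: nsmul_def)
lemma nsmul_Suc0[simp]: "nsmul (Suc 0) u = u" by (simp add: nsmul_def)
lemma nsmul_add: "nsmul (m + n) u = nsmul m u + nsmul n u"
  by (induction n) (auto simp: nsmul_Suc add.assoc)
lemma nsmul_mono: "(x::'a::ordered_ab_group_add) \<le> y \<Longrightarrow> nsmul n x \<le> nsmul n y"
  unfolding nsmul_def by (rule sum_mono) auto
lemma nsmul_nonneg: "0 \<le> (x::'a::ordered_ab_group_add) \<Longrightarrow> 0 \<le> nsmul n x"
  unfolding nsmul_def by (rule sum_nonneg) auto
lemma nsmul_mono_n: assumes "0 \<le> (u::'a::ordered_ab_group_add)" "m \<le> n"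
  shows "nsmul m u \<le> nsmul n u"
proof -
  obtain d where "n = m + d" using assms(2) le_Suc_ex by blast
  then show ?thesis using nsmul_nonneg[OF assms(1), of d] by (simp add: nsmul_add)
qed
lemma nsmul_diff: "nsmul n (x - y) = nsmul n x - nsmul n (y::'a::ab_group_add)"
  unfolding nsmul_def by (rule sum_subtractf)

definition big :: "nat \<Rightarrow> 'a::ordered_ab_group_add set \<Rightarrow> bool" where
  "big n S \<longleftrightarrow> (\<forall>g. 0 \<le> g \<longrightarrow> (\<exists>s\<in>S. g \<le> nsmul n s))"

lemma interval_D:
  assumes "is_interval X"
  shows "\<And>x. x \<in> X \<Longrightarrow> 0 \<le> x" and "0 \<in> X"
    and "\<And>x y. x \<in> X \<Longrightarrow> y \<in> X \<Longrightarrow> \<exists>z\<in>X. x \<le> z \<and> y \<le> z"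
    and "\<And>x z. x \<in> X \<Longrightarrow> 0 \<le> z \<Longrightarrow> z \<le> x \<Longrightarrow> z \<in> X"
proof -
  show p: "\<And>x. x \<in> X \<Longrightarrow> 0 \<le> x" using assms by (auto simp: is_interval_def pos_cone_def)
  show "\<And>x y. x \<in> X \<Longrightarrow> y \<in> X \<Longrightarrow> \<exists>z\<in>X. x \<le> z \<and> y \<le> z"
    using assms by (auto simp: is_interval_def)
  show h: "\<And>x z. x \<in> X \<Longrightarrow> 0 \<le> z \<Longrightarrow> z \<le> x \<Longrightarrow> z \<in> X"
    using assms unfolding is_interval_def by blast
  obtain x where "x \<in> X" using assms unfolding is_interval_def by (metis ex_in_conv)
  then show "0 \<in> X" using h[of x 0] p[of x] by simp
qed

lemma interval_I:
  assumes "\<And>x. x \<in> X \<Longrightarrow> 0 \<le> x" and "0 \<in> X"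
    and "\<And>x y. x \<in> X \<Longrightarrow> y \<in> X \<Longrightarrow> \<exists>z\<in>X. x \<le> z \<and> y \<le> z"
    and "\<And>x z. x \<in> X \<Longrightarrow> 0 \<le> z \<Longrightarrow> z \<le> x \<Longrightarrow> z \<in> X"
  shows "is_interval X"
  using assms unfolding is_interval_def pos_cone_def by blast

lemma riesz_dec:
  fixes x y1 y2 :: "'a::ordered_ab_group_add"
  assumes R: "riesz_group TYPE('a)" and "0 \<le> x" "0 \<le> y1" "0 \<le> y2" "x \<le> y1 + y2"
  shows "\<exists>x1 x2. x = x1 + x2 \<and> 0 \<le> x1 \<and> 0 \<le> x2 \<and> x1 \<le> y1 \<and> x2 \<le> y2"
proof -
  have "\<forall>x y1 y2::'a. 0 \<le> x \<and> 0 \<le> y1 \<and> 0 \<le> y2 \<and> x \<le> y1 + y2 \<longrightarrow>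
     (\<exists>x1 x2. x = x1 + x2 \<and> 0 \<le> x1 \<and> 0 \<le> x2 \<and> x1 \<le> y1 \<and> x2 \<le> y2)"
    using R unfolding riesz_group_def by simp
  then show ?thesis using assms(2-5) by simp
qed

lemma interpolation:
  fixes x1 x2 y1 y2 :: "'a::ordered_ab_group_add"
  assumes R: "riesz_group TYPE('a)"
    and "x1 \<le> y1" "x1 \<le> y2" "x2 \<le> y1" "x2 \<le> y2"
  shows "\<exists>c. x1 \<le> c \<and> x2 \<le> c \<and> c \<le> y1 \<and> c \<le> y2"
proof -
  have a: "0 \<le> y1 - x1" "0 \<le> y1 - x2" "0 \<le> y2 - x1" using assms by auto
  have eq: "(y1 - x2) + (y2 - x1) = (y1 - x1) + (y2 - x2)" by (simp add: algebra_simps)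
  have "0 \<le> y2 - x2" using assms(5) by simp
  then have b: "y1 - x1 \<le> (y1 - x2) + (y2 - x1)" unfolding eq by (rule add_increasing2) simp
  obtain w1 w2 where w: "y1 - x1 = w1 + w2" "0 \<le> w1" "0 \<le> w2" "w1 \<le> y1 - x2" "w2 \<le> y2 - x1"
    using riesz_dec[OF R a(1) a(2) a(3) b] by blast
  have e: "x1 + w2 = y1 - w1" using w(1) by (simp add: algebra_simps)
  show ?thesis
  proof (intro exI conjI)
    show "x1 \<le> x1 + w2" using w(3) by simp
    show "x2 \<le> x1 + w2" unfolding e using w(4) by (metis le_diff_eq add.commute)
    show "x1 + w2 \<le> y2" using w(5) by (metis le_diff_eq add.commute)
    show "x1 + w2 \<le> y1" unfolding e using w(2) by simp
  qed
qed

lemma interval_inter: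
  assumes R: "riesz_group TYPE('a::ordered_ab_group_add)"
    and A: "is_interval (A::'a set)" and B: "is_interval B"
  shows "is_interval (A \<inter> B)"
proof (rule interval_I)
  note a = interval_D[OF A] and b = interval_D[OF B]
  show "\<And>x. x \<in> A \<inter> B \<Longrightarrow> 0 \<le> x" using a(1) by simp
  show "0 \<in> A \<inter> B" using a(2) b(2) by simp
  show "\<And>x z. x \<in> A \<inter> B \<Longrightarrow> 0 \<le> z \<Longrightarrow> z \<le> x \<Longrightarrow> z \<in> A \<inter> B"
  proof -
    fix x z assume "x \<in> A \<inter> B" "0 \<le> z" "z \<le> x"
    then show "z \<in> A \<inter> B" using a(4)[of x z] b(4)[of x z] by simp
  qed
  fix x y assume xy: "x \<in> A \<inter> B" "y \<in> A \<inter> B"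
  obtain p where p: "p \<in> A" "x \<le> p" "y \<le> p" using a(3)[of x y] xy by auto
  obtain r where r: "r \<in> B" "x \<le> r" "y \<le> r" using b(3)[of x y] xy by auto
  obtain c where c: "x \<le> c" "y \<le> c" "c \<le> p" "c \<le> r"
    using interpolation[OF R p(2) r(2) p(3) r(3)] by blast
  have "0 \<le> x" using a(1)[of x] xy by simp
  then have "0 \<le> c" using c(1) by (rule order_trans)
  then have "c \<in> A \<inter> B" using a(4)[OF p(1), of c] b(4)[OF r(1), of c] c by simp
  then show "\<exists>z\<in>A \<inter> B. x \<le> z \<and> y \<le> z" using c by blast
qed

lemma split_lemma:
  fixes a :: "'a::ordered_ab_group_add"
  assumes R: "riesz_group TYPE('a)" and U: "is_interval U" and a0: "0 \<le> a"
    and H: "\<And>h. 0 \<le> h \<Longrightarrow> h \<le> a \<Longrightarrow> h \<le> G0 \<Longrightarrow> (\<exists>c\<in>U. h \<le> nsmul m c)"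
  shows "0 \<le> g \<Longrightarrow> g \<le> G0 \<Longrightarrow> g \<le> nsmul n a \<Longrightarrow> \<exists>c\<in>U. g \<le> nsmul (n*m) c"
proof (induction n arbitrary: g)
  case 0
  then have "g = 0" by simp
  then show ?case using interval_D(2)[OF U] by auto
next
  case (Suc n)
  have "0 \<le> nsmul n a" using a0 nsmul_nonneg by blast
  moreover have "g \<le> nsmul n a + a" using Suc.prems by (simp add: nsmul_Suc)
  ultimately obtain g1 g2 where g: "g = g1 + g2" "0 \<le> g1" "0 \<le> g2" "g1 \<le> nsmul n a" "g2 \<le> a"
    using riesz_dec[OF R, of g "nsmul n a" a] Suc.prems a0 by blast
  have "g1 \<le> g" using g(1,3) by simp
  then have "g1 \<le> G0" using Suc.prems(2) by (rule order_trans)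
  then obtain c1 where c1: "c1 \<in> U" "g1 \<le> nsmul (n*m) c1" using Suc.IH g(2,4) by blast
  have "g2 \<le> g" using g(1,2) by simp
  then have "g2 \<le> G0" using Suc.prems(2) by (rule order_trans)
  then obtain c2 where c2: "c2 \<in> U" "g2 \<le> nsmul m c2" using H[of g2] g(3,5) by blast
  obtain c where c: "c \<in> U" "c1 \<le> c" "c2 \<le> c" using interval_D(3)[OF U c1(1) c2(1)] by blast
  have "nsmul (n*m) c1 \<le> nsmul (n*m) c" "nsmul m c2 \<le> nsmul m c" using c nsmul_mono by auto
  then have "g1 \<le> nsmul (n*m) c" "g2 \<le> nsmul m c" using c1(2) c2(2) by (auto intro: order_trans)
  then have "g \<le> nsmul (n*m) c + nsmul m c"
    unfolding g(1) by (rule add_mono)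
  also have "\<dots> = nsmul (Suc n * m) c" by (simp add: nsmul_add add.commute)
  finally show ?case using c by blast
qed

lemma big_inter:
  assumes R: "riesz_group TYPE('a::ordered_ab_group_add)"
    and A: "is_interval (A::'a set)" and B: "is_interval B"
    and bA: "big p A" and bB: "big r B"
  shows "big (p*r) (A \<inter> B)"
  unfolding big_def
proof (intro allI impI)
  fix g :: 'a assume g: "0 \<le> g"
  have U: "is_interval (A \<inter> B)" by (rule interval_inter[OF R A B])
  obtain a where a: "a \<in> A" "g \<le> nsmul p a" using bA g unfolding big_def by blast
  have a0: "0 \<le> a" using interval_D(1)[OF A a(1)] .
  show "\<exists>s\<in>A \<inter> B. g \<le> nsmul (p * r) s"
  proof (rule split_lemma[OF R U a0, of g r g p])
    fix h assume h: "0 \<le> h" "h \<le> a" "h \<le> g"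
    have hA: "h \<in> A" using interval_D(4)[OF A a(1) h(1,2)] .
    obtain b where b: "b \<in> B" "h \<le> nsmul r b" using bB h unfolding big_def by blast
    have b0: "0 \<le> b" using interval_D(1)[OF B b(1)] .
    have "\<exists>c\<in>A \<inter> B. h \<le> nsmul (r*1) c"
    proof (rule split_lemma[OF R U b0, of h 1 h r])
      fix h' assume h': "0 \<le> h'" "h' \<le> b" "h' \<le> h"
      have "h' \<in> A" using interval_D(4)[OF A hA h'(1,3)] .
      moreover have "h' \<in> B" using interval_D(4)[OF B b(1) h'(1,2)] .
      ultimately show "\<exists>c\<in>A \<inter> B. h' \<le> nsmul 1 c" by (intro bexI[of _ h']) auto
    qed (simp_all add: h b)
    then show "\<exists>c\<in>A \<inter> B. h \<le> nsmul r c" by simp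
  qed (simp_all add: g a)
qed


lemma room:
  assumes D: "is_interval (D::'a::ordered_ab_group_add set)" and a: "a \<in> D" and bD: "big q D"
  shows "is_interval {b. 0 \<le> b \<and> a + b \<in> D}" and "big q {b. 0 \<le> b \<and> a + b \<in> D}"
proof -
  note d = interval_D[OF D]
  have a0: "0 \<le> a" using d(1)[OF a] .
  show "is_interval {b. 0 \<le> b \<and> a + b \<in> D}"
  proof (rule interval_I)
    show "0 \<in> {b. 0 \<le> b \<and> a + b \<in> D}" using a by simp
    show "\<And>x. x \<in> {b. 0 \<le> b \<and> a + b \<in> D} \<Longrightarrow> 0 \<le> x" by simp
    show "\<And>x z. x \<in> {b. 0 \<le> b \<and> a + b \<in> D} \<Longrightarrow> 0 \<le> z \<Longrightarrow> z \<le> x \<Longrightarrow> z \<in> {b. 0 \<le> b \<and> a + b \<in> D}"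
    proof -
      fix x z assume "x \<in> {b. 0 \<le> b \<and> a + b \<in> D}" "0 \<le> z" "z \<le> x"
      moreover have "0 \<le> a + z" using a0 \<open>0 \<le> z\<close> by simp
      ultimately show "z \<in> {b. 0 \<le> b \<and> a + b \<in> D}" using d(4)[of "a + x" "a + z"] by auto
    qed
    fix x y assume xy: "x \<in> {b. 0 \<le> b \<and> a + b \<in> D}" "y \<in> {b. 0 \<le> b \<and> a + b \<in> D}"
    then obtain e where e: "e \<in> D" "a + x \<le> e" "a + y \<le> e" using d(3) by blast
    have x0: "0 \<le> x" using xy by simp
    have "a \<le> a + x" using x0 by simp
    then have "a \<le> e" using e(2) by (rule order_trans)
    then have "0 \<le> e - a" by simp
    moreover have "a + (e - a) = e" by simp
    ultimately have "e - a \<in> {b. 0 \<le> b \<and> a + b \<in> D}" using e(1) by simp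
    moreover have "x \<le> e - a" "y \<le> e - a" using e(2,3) by (simp_all add: le_diff_eq add.commute)
    ultimately show "\<exists>z\<in>{b. 0 \<le> b \<and> a + b \<in> D}. x \<le> z \<and> y \<le> z" by blast
  qed
  show "big q {b. 0 \<le> b \<and> a + b \<in> D}"
    unfolding big_def
  proof (intro allI impI)
    fix g :: 'a assume g: "0 \<le> g"
    have "0 \<le> g + nsmul q a" using g nsmul_nonneg[OF a0] by simp
    then obtain e where e: "e \<in> D" "g + nsmul q a \<le> nsmul q e" using bD unfolding big_def by blast
    obtain e' where e': "e' \<in> D" "e \<le> e'" "a \<le> e'" using d(3)[OF e(1) a] by blast
    have "g + nsmul q a \<le> nsmul q e'" using e e' nsmul_mono order_trans by blast
    then have "g \<le> nsmul q (e' - a)" unfolding nsmul_diff le_diff_eq .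
    moreover have "e' - a \<in> {b. 0 \<le> b \<and> a + b \<in> D}" using e' by simp
    ultimately show "\<exists>s\<in>{b. 0 \<le> b \<and> a + b \<in> D}. g \<le> nsmul q s" by blast
  qed
qed

definition Tset :: "(nat \<Rightarrow> 'a::ordered_ab_group_add set) \<Rightarrow> (nat \<Rightarrow> 'a) \<Rightarrow> nat \<Rightarrow> 'a set" where
  "Tset D x j = {b. 0 \<le> b \<and> (\<forall>l\<in>{1..j}. x l + b \<in> D l)}"

lemma Tset_big:
  assumes R: "riesz_group TYPE('a::ordered_ab_group_add)"
    and DI: "\<And>l. 1 \<le> l \<Longrightarrow> is_interval (D l :: 'a set)"
    and DB: "\<And>l. 1 \<le> l \<Longrightarrow> big (q l) (D l)"
    and X: "\<And>l. 1 \<le> l \<Longrightarrow> x l \<in> D l"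
  shows "is_interval (Tset D x j) \<and> big (prod q {1..j}) (Tset D x j)"
proof (induction j)
  case 0
  have "Tset D x 0 = {b. 0 \<le> b}" by (auto simp: Tset_def)
  moreover have "is_interval {b::'a. 0 \<le> b}"
  proof (rule interval_I)
    fix u v :: 'a assume "u \<in> {b. 0 \<le> b}" "v \<in> {b. 0 \<le> b}"
    then show "\<exists>z\<in>{b. 0 \<le> b}. u \<le> z \<and> v \<le> z"
      by (intro bexI[of _ "u + v"]) (auto simp: add_increasing add_increasing2)
  qed auto
  moreover have "big 1 {b::'a. 0 \<le> b}" unfolding big_def by auto
  ultimately show ?case by simp
next
  case (Suc j)
  have "Tset D x (Suc j) = Tset D x j \<inter> {b. 0 \<le> b \<and> x (Suc j) + b \<in> D (Suc j)}"
  proof -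
    have "{1..Suc j} = insert (Suc j) {1..j}" by (auto simp: le_Suc_eq)
    then show ?thesis by (auto simp: Tset_def)
  qed
  moreover have "prod q {1..Suc j} = prod q {1..j} * q (Suc j)"
    by (simp add: prod.nat_ivl_Suc')
  moreover have "is_interval {b. 0 \<le> b \<and> x (Suc j) + b \<in> D (Suc j)}"
    "big (q (Suc j)) {b. 0 \<le> b \<and> x (Suc j) + b \<in> D (Suc j)}"
    using room[OF DI X DB, of "Suc j"] by auto
  ultimately show ?case using Suc.IH big_inter[OF R, of "Tset D x j" "{b. 0 \<le> b \<and> x (Suc j) + b \<in> D (Suc j)}"]
      interval_inter[OF R, of "Tset D x j" "{b. 0 \<le> b \<and> x (Suc j) + b \<in> D (Suc j)}"] by simp
qed

lemma interval_mult_char: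
  assumes S: "is_interval (S::'a::ordered_ab_group_add set)"
  shows "1 \<le> n \<Longrightarrow> interval_mult n S = {z. 0 \<le> z \<and> (\<exists>s\<in>S. z \<le> nsmul n s)}"
proof (induction n)
  case 0 then show ?case by simp
next
  case (Suc n)
  note s = interval_D[OF S]
  show ?case
  proof (cases n)
    case 0
    have "S = {z. 0 \<le> z \<and> (\<exists>s\<in>S. z \<le> s)}"
    proof (rule set_eqI, rule iffI)
      fix z assume "z \<in> S" then show "z \<in> {z. 0 \<le> z \<and> (\<exists>s\<in>S. z \<le> s)}" using s(1)[of z] by auto
    next
      fix z assume "z \<in> {z. 0 \<le> z \<and> (\<exists>s\<in>S. z \<le> s)}"
      then obtain t where "0 \<le> z" "t \<in> S" "z \<le> t" by auto
      then show "z \<in> S" using s(4) by blast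
    qed
    then show ?thesis using 0 by simp
  next
    case (Suc n')
    then have IH: "interval_mult n S = {z. 0 \<le> z \<and> (\<exists>s\<in>S. z \<le> nsmul n s)}" using Suc.IH by simp
    have "interval_mult (Suc n) S = interval_add (interval_mult n S) S" using Suc by simp
    also have "\<dots> = {z. 0 \<le> z \<and> (\<exists>s\<in>S. z \<le> nsmul (Suc n) s)}"
    proof (rule set_eqI, rule iffI)
      fix z assume "z \<in> interval_add (interval_mult n S) S"
      then obtain x y s1 where z: "0 \<le> z" "z \<le> x + y" "y \<in> S" "s1 \<in> S" "x \<le> nsmul n s1"
        unfolding interval_add_def IH by blast
      obtain s where s': "s \<in> S" "s1 \<le> s" "y \<le> s" using s(3)[OF z(4) z(3)] by blast
      have "nsmul n s1 \<le> nsmul n s" using s'(2) by (rule nsmul_mono)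
      then have "x \<le> nsmul n s" using z(5) by (rule order_trans[rotated])
      then have "x + y \<le> nsmul n s + s" using s'(3) by (rule add_mono)
      then have "z \<le> nsmul (Suc n) s" unfolding nsmul_Suc using z(2) by (rule order_trans[rotated])
      then show "z \<in> {z. 0 \<le> z \<and> (\<exists>s\<in>S. z \<le> nsmul (Suc n) s)}"
        using z(1) s'(1) by blast
    next
      fix z assume "z \<in> {z. 0 \<le> z \<and> (\<exists>s\<in>S. z \<le> nsmul (Suc n) s)}"
      then obtain s where z: "0 \<le> z" "s \<in> S" "z \<le> nsmul n s + s" by (auto simp: nsmul_Suc)
      have "0 \<le> nsmul n s" using s(1)[OF z(2)] by (rule nsmul_nonneg)
      then have "nsmul n s \<in> interval_mult n S" unfolding IH using z(2) by blast
      then show "z \<in> interval_add (interval_mult n S) S"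
        unfolding interval_add_def using z by blast
    qed
    finally show ?thesis .
  qed
qed

lemma interval_mult_eq_pos:
  assumes S: "is_interval (S::'a::ordered_ab_group_add set)" and n: "1 \<le> n"
  shows "interval_mult n S = pos_cone \<longleftrightarrow> big n S"
  unfolding interval_mult_char[OF S n] big_def pos_cone_def by auto

lemma interval_add_mono: "A \<subseteq> A' \<Longrightarrow> B \<subseteq> B' \<Longrightarrow> interval_add A B \<subseteq> interval_add A' B'"
  unfolding interval_add_def by blast

lemma interval_mult_mono: "S \<subseteq> S' \<Longrightarrow> interval_mult t S \<subseteq> interval_mult t S'"
proof (induction t S rule: interval_mult.induct)
  case (3 n X)
  then show ?case using interval_add_mono by simp
qed auto

lemma interval_mult_pos: "S \<subseteq> pos_cone \<Longrightarrow> 1 \<le> t \<Longrightarrow> interval_mult t S \<subseteq> pos_cone"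
proof (induction t S rule: interval_mult.induct)
  case (3 n X)
  then show ?case by (auto simp: interval_add_def pos_cone_def)
qed auto


lemma seq_cg:
  fixes f :: "nat \<Rightarrow> 'a::ordered_ab_group_add"
  assumes inc: "\<And>k. f k \<le> f (Suc k)" and f0: "0 \<le> f 0"
  shows "cg_interval {y. 0 \<le> y \<and> (\<exists>k. y \<le> f k)}"
proof -
  have mono: "\<And>k k'. k \<le> k' \<Longrightarrow> f k \<le> f k'" using lift_Suc_mono_le[of f] inc by blast
  have nn: "\<And>k. 0 \<le> f k" using f0 mono[of 0] order_trans by blast
  let ?X = "{y. 0 \<le> y \<and> (\<exists>k. y \<le> f k)}"
  have "is_interval ?X"
  proof (rule interval_I)
    show "0 \<in> ?X" using f0 by blast
    show "\<And>x. x \<in> ?X \<Longrightarrow> 0 \<le> x" by simp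
    show "\<And>x z. x \<in> ?X \<Longrightarrow> 0 \<le> z \<Longrightarrow> z \<le> x \<Longrightarrow> z \<in> ?X"
    proof -
      fix x z assume "x \<in> ?X" "0 \<le> z" "z \<le> x"
      then obtain k where "x \<le> f k" by blast
      then have "z \<le> f k" using \<open>z \<le> x\<close> by (rule order_trans[rotated])
      then show "z \<in> ?X" using \<open>0 \<le> z\<close> by blast
    qed
    fix x y assume "x \<in> ?X" "y \<in> ?X"
    then obtain k1 k2 where k: "x \<le> f k1" "y \<le> f k2" by blast
    have "f k1 \<le> f (max k1 k2)" "f k2 \<le> f (max k1 k2)" by (simp_all add: mono)
    then have "x \<le> f (max k1 k2)" "y \<le> f (max k1 k2)" using k by (auto intro: order_trans)
    moreover have "f (max k1 k2) \<in> ?X" using nn by blast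
    ultimately show "\<exists>z\<in>?X. x \<le> z \<and> y \<le> z" by blast
  qed
  moreover have "countable (range f)" by simp
  moreover have "range f \<subseteq> ?X" using nn by blast
  moreover have "\<forall>x\<in>?X. \<exists>c\<in>range f. x \<le> c" by blast
  ultimately show ?thesis unfolding cg_interval_def by blast
qed

definition jj :: "nat \<Rightarrow> nat" where "jj k = fst (prod_decode k) + 1"

lemma jj_surj: "1 \<le> l \<Longrightarrow> jj (prod_encode (l - 1, n)) = l \<and> n \<le> prod_encode (l - 1, n)"
  by (simp add: jj_def le_prod_encode_2)

fun row :: "(nat \<Rightarrow> 'a::ordered_ab_group_add set) \<Rightarrow> (nat \<Rightarrow> nat) \<Rightarrow> 'a \<Rightarrow> nat \<Rightarrow> nat \<Rightarrow> 'a" where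
  "row D q u 0 = (\<lambda>l. 0)"
| "row D q u (Suc k) = (let x = row D q u k;
      d = (SOME d. d \<in> Tset D x (jj k) \<and> nsmul k u \<le> nsmul (prod q {1..jj k}) d)
    in (\<lambda>l. if 1 \<le> l \<and> l \<le> jj k then x l + d else x l))"

definition dch :: "(nat \<Rightarrow> 'a::ordered_ab_group_add set) \<Rightarrow> (nat \<Rightarrow> nat) \<Rightarrow> 'a \<Rightarrow> nat \<Rightarrow> 'a" where
  "dch D q u k = (SOME d. d \<in> Tset D (row D q u k) (jj k) \<and> nsmul k u \<le> nsmul (prod q {1..jj k}) d)"

lemma row_Suc': "row D q u (Suc k) l =
   (if 1 \<le> l \<and> l \<le> jj k then row D q u k l + dch D q u k else row D q u k l)"
  by (simp add: dch_def Let_def)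

theorem proposition3p5:
  fixes q :: "nat \<Rightarrow> nat" and D :: "nat \<Rightarrow> 'a::ordered_ab_group_add set"
  assumes "simple_group TYPE('a)"
    and "riesz_group TYPE('a)"
    and "\<And>i. 1 \<le> i \<Longrightarrow> q i \<le> q (Suc i)"
    and "\<And>i j. 1 \<le> i \<Longrightarrow> 1 \<le> j \<Longrightarrow> i \<noteq> j \<Longrightarrow> gcd (q i) (q j) = 1"
    and "\<And>i. 1 \<le> i \<Longrightarrow> cg_interval (D i)"
    and "\<And>i t. 1 \<le> i \<Longrightarrow> 1 \<le> t \<Longrightarrow> t + 1 \<le> q i \<Longrightarrow> interval_mult t (D i) \<noteq> pos_cone"
    and "\<And>i. 1 \<le> i \<Longrightarrow> interval_mult (q i) (D i) = pos_cone"
  shows "\<exists>X :: nat \<Rightarrow> 'a set.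
           (\<forall>i\<ge>1. cg_interval (X i)) \<and>
           (\<forall>i\<ge>1. \<exists>Y. cg_interval Y \<and> interval_add (X (Suc i)) Y = X i) \<and>
           (\<forall>i\<ge>1. \<forall>t. 1 \<le> t \<and> t + 1 \<le> q i \<longrightarrow> interval_mult t (X i) \<noteq> pos_cone) \<and>
           (\<forall>i\<ge>1. interval_mult (\<Prod>j=1..i. q j) (X i) = pos_cone)"
proof -
  note R = assms(2)
  have DI: "\<And>l. 1 \<le> l \<Longrightarrow> is_interval (D l)" using assms(5) cg_interval_def by blast
  have DB: "\<And>l. 1 \<le> l \<Longrightarrow> big (q l) (D l)"
  proof -
    fix l :: nat assume l: "1 \<le> l"
    show "big (q l) (D l)"
    proof (cases "q l = 0")
      case True
      then have "pos_cone = ({0}::'a set)" using assms(7)[OF l] by simp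
      then have "\<And>g::'a. 0 \<le> g \<Longrightarrow> g = 0" unfolding pos_cone_def by blast
      then show ?thesis unfolding big_def using interval_D(2)[OF DI[OF l]] True by auto
    next
      case False
      then show ?thesis using interval_mult_eq_pos[OF DI[OF l], of "q l"] assms(7)[OF l] by simp
    qed
  qed
  obtain u :: 'a where u0: "0 \<le> u" and uc: "\<And>g. 0 \<le> g \<Longrightarrow> \<exists>n. g \<le> nsmul n u"
  proof (cases "\<exists>u::'a. 0 \<le> u \<and> u \<noteq> 0")
    case True
    then obtain u :: 'a where "0 \<le> u" "u \<noteq> 0" by blast
    then have "order_unit u" using assms(1) unfolding simple_group_def by blast
    then show ?thesis using that unfolding order_unit_def by blast
  next
    case False
    then have "\<And>g::'a. 0 \<le> g \<Longrightarrow> g \<le> nsmul 0 0" by auto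
    then show ?thesis using that[of 0] by blast
  qed
  define Q where "Q = (\<lambda>j. prod q {1..j})"
  define r where "r = row D q u"
  define d where "d = dch D q u"
  have rS: "\<And>k l. r (Suc k) l = (if 1 \<le> l \<and> l \<le> jj k then r k l + d k else r k l)"
    unfolding r_def d_def by (rule row_Suc')
  have dex: "\<And>k. (\<forall>l. 1 \<le> l \<longrightarrow> r k l \<in> D l) \<Longrightarrow>
      d k \<in> Tset D (r k) (jj k) \<and> nsmul k u \<le> nsmul (Q (jj k)) (d k)"
  proof -
    fix k assume inv: "\<forall>l. 1 \<le> l \<longrightarrow> r k l \<in> D l"
    have X: "\<And>l. 1 \<le> l \<Longrightarrow> r k l \<in> D l" using inv by simp
    have "big (prod q {1..jj k}) (Tset D (r k) (jj k))"
      using Tset_big[OF R DI DB X] by simp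
    then have "big (Q (jj k)) (Tset D (r k) (jj k))" unfolding Q_def .
    moreover have "0 \<le> nsmul k u" using u0 by (rule nsmul_nonneg)
    ultimately have ex: "\<exists>s. s \<in> Tset D (r k) (jj k) \<and> nsmul k u \<le> nsmul (Q (jj k)) s"
      unfolding big_def by blast
    have "d k = (SOME s. s \<in> Tset D (r k) (jj k) \<and> nsmul k u \<le> nsmul (Q (jj k)) s)"
      unfolding d_def dch_def r_def Q_def by (rule refl)
    then show "d k \<in> Tset D (r k) (jj k) \<and> nsmul k u \<le> nsmul (Q (jj k)) (d k)"
      using someI_ex[OF ex] by simp
  qed
  have inv: "\<And>k. \<forall>l. 1 \<le> l \<longrightarrow> r k l \<in> D l"
  proof -
    fix k show "\<forall>l. 1 \<le> l \<longrightarrow> r k l \<in> D l"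
    proof (induction k)
      case 0
      then show ?case using interval_D(2)[OF DI] by (simp add: r_def)
    next
      case (Suc k)
      have T: "d k \<in> Tset D (r k) (jj k)" using dex Suc.IH by blast
      show ?case
      proof (intro allI impI)
        fix l :: nat assume l: "1 \<le> l"
        show "r (Suc k) l \<in> D l"
        proof (cases "l \<le> jj k")
          case True
          then have "r k l + d k \<in> D l" using T l unfolding Tset_def by simp
          then show ?thesis unfolding rS using True l by simp
        next
          case False
          then show ?thesis using Suc.IH l unfolding rS by simp
        qed
      qed
    qed
  qed
  have dprop: "\<And>k. d k \<in> Tset D (r k) (jj k) \<and> nsmul k u \<le> nsmul (Q (jj k)) (d k)"
    using dex inv by blast
  have d0: "\<And>k. 0 \<le> d k" using dprop unfolding Tset_def by blast
  have r0: "\<And>k l. 1 \<le> l \<Longrightarrow> 0 \<le> r k l"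
  proof -
    fix k l :: nat assume l: "1 \<le> l"
    have "r k l \<in> D l" using inv l by simp
    then show "0 \<le> r k l" by (rule interval_D(1)[OF DI[OF l]])
  qed
  have rinc: "\<And>k l. r k l \<le> r (Suc k) l" unfolding rS using d0 by simp
  have rdinc: "\<And>k l. 1 \<le> l \<Longrightarrow> r k l - r k (Suc l) \<le> r (Suc k) l - r (Suc k) (Suc l)"
  proof -
    fix k l :: nat assume l: "1 \<le> l"
    consider "Suc l \<le> jj k" | "l = jj k" | "jj k < l" by linarith
    then show "r k l - r k (Suc l) \<le> r (Suc k) l - r (Suc k) (Suc l)"
    proof cases
      case 1 then show ?thesis unfolding rS using l by simp
    next
      case 2
      have e: "r (Suc k) l - r (Suc k) (Suc l) = (r k l - r k (Suc l)) + d k"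
        unfolding rS using l 2 by (simp add: algebra_simps)
      show ?thesis unfolding e using d0[of k] by simp
    next
      case 3 then show ?thesis unfolding rS using l by simp
    qed
  qed
  define X where "X = (\<lambda>l. {y. 0 \<le> y \<and> (\<exists>k. y \<le> r k l)})"
  define Y where "Y = (\<lambda>l. {y. 0 \<le> y \<and> (\<exists>k. y \<le> r k l - r k (Suc l))})"
  have rmono: "\<And>k k' l. k \<le> k' \<Longrightarrow> r k l \<le> r k' l"
  proof -
    fix k k' l :: nat assume "k \<le> k'"
    then show "r k l \<le> r k' l" by (rule lift_Suc_mono_le[of "\<lambda>k. r k l", OF rinc])
  qed
  have rdmono: "\<And>k k' l. 1 \<le> l \<Longrightarrow> k \<le> k' \<Longrightarrow> r k l - r k (Suc l) \<le> r k' l - r k' (Suc l)"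
  proof -
    fix k k' l :: nat assume "1 \<le> l" "k \<le> k'"
    then show "r k l - r k (Suc l) \<le> r k' l - r k' (Suc l)"
      using lift_Suc_mono_le[of "\<lambda>k. r k l - r k (Suc l)", OF rdinc] by simp
  qed
  have Xcg: "\<And>l. 1 \<le> l \<Longrightarrow> cg_interval (X l)"
    unfolding X_def by (rule seq_cg) (simp_all add: rinc r0)
  have Ycg: "\<And>l. 1 \<le> l \<Longrightarrow> cg_interval (Y l)"
  proof -
    fix l :: nat assume l: "1 \<le> l"
    have "0 \<le> r 0 l - r 0 (Suc l)" by (simp add: r_def)
    then show "cg_interval (Y l)" unfolding Y_def
      using seq_cg[of "\<lambda>k. r k l - r k (Suc l)", OF rdinc[OF l]] by simp
  qed
  show ?thesis
  proof (rule exI[of _ X], intro conjI allI impI)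
    fix i :: nat assume i: "1 \<le> i"
    show "cg_interval (X i)" using Xcg[OF i] .
  next
    fix i :: nat assume i: "1 \<le> i"
    have "interval_add (X (Suc i)) (Y i) = X i"
    proof (rule set_eqI, rule iffI)
      fix z assume "z \<in> interval_add (X (Suc i)) (Y i)"
      then obtain x y k1 k2 where z: "0 \<le> z" "z \<le> x + y" "x \<le> r k1 (Suc i)"
        "y \<le> r k2 i - r k2 (Suc i)"
        unfolding interval_add_def X_def Y_def by blast
      let ?k = "max k1 k2"
      have "r k1 (Suc i) \<le> r ?k (Suc i)" by (simp add: rmono)
      moreover have "r k2 i - r k2 (Suc i) \<le> r ?k i - r ?k (Suc i)" using rdmono[OF i] by simp
      ultimately have "x \<le> r ?k (Suc i)" "y \<le> r ?k i - r ?k (Suc i)"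
        using z(3,4) by (meson order_trans)+
      then have "x + y \<le> r ?k (Suc i) + (r ?k i - r ?k (Suc i))" by (rule add_mono)
      then have "x + y \<le> r ?k i" by simp
      then have "z \<le> r ?k i" using z(2) by (rule order_trans[rotated])
      then show "z \<in> X i" unfolding X_def using z(1) by blast
    next
      fix z assume "z \<in> X i"
      then obtain k where z: "0 \<le> z" "z \<le> r k i" unfolding X_def by blast
      have "r k (Suc i) \<in> X (Suc i)" unfolding X_def using r0[of "Suc i" k] by auto
      moreover have "0 \<le> r k i - r k (Suc i)"
      proof -
        have "r 0 i - r 0 (Suc i) \<le> r k i - r k (Suc i)" using rdmono[OF i] by simp
        then show ?thesis by (simp add: r_def)
      qed
      then have "r k i - r k (Suc i) \<in> Y i" unfolding Y_def by blast
      moreover have "z \<le> r k (Suc i) + (r k i - r k (Suc i))" using z by simp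
      ultimately show "z \<in> interval_add (X (Suc i)) (Y i)"
        unfolding interval_add_def using z(1) by blast
    qed
    then show "\<exists>Y. cg_interval Y \<and> interval_add (X (Suc i)) Y = X i"
      using Ycg[OF i] by blast
  next
    fix i t :: nat assume i: "1 \<le> i" and t: "1 \<le> t \<and> t + 1 \<le> q i"
    have sub: "X i \<subseteq> D i"
    proof
      fix z assume "z \<in> X i"
      then obtain k where z: "0 \<le> z" "z \<le> r k i" unfolding X_def by blast
      have "r k i \<in> D i" using inv i by simp
      then show "z \<in> D i" using interval_D(4)[OF DI[OF i] _ z] by simp
    qed
    have "interval_mult t (X i) \<subseteq> interval_mult t (D i)" using sub by (rule interval_mult_mono)
    moreover have "interval_mult t (D i) \<subseteq> pos_cone"
    proof -
      have "D i \<subseteq> pos_cone" using DI[OF i] unfolding is_interval_def by simp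
      then show ?thesis using t by (simp add: interval_mult_pos)
    qed
    moreover have "interval_mult t (D i) \<noteq> pos_cone" using assms(6)[OF i, of t] t by simp
    ultimately show "interval_mult t (X i) \<noteq> pos_cone" by blast
  next
    fix i :: nat assume i: "1 \<le> i"
    show "interval_mult (\<Prod>j=1..i. q j) (X i) = pos_cone"
    proof (cases "(\<Prod>j=1..i. q j) = 0")
      case True
      then obtain j where j: "1 \<le> j" "q j = 0" by auto
      then have pc: "pos_cone = ({0}::'a set)" using assms(7)[OF j(1)] by simp
      show ?thesis unfolding True pc by simp
    next
      case False
      have XI: "is_interval (X i)" using Xcg[OF i] unfolding cg_interval_def by blast
      have "big (\<Prod>j=1..i. q j) (X i)"
        unfolding big_def
      proof (intro allI impI)
        fix g :: 'a assume g: "0 \<le> g"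
        obtain n where n: "g \<le> nsmul n u" using uc[OF g] by blast
        define k where "k = prod_encode (i - 1, n)"
        have jk: "jj k = i" "n \<le> k" using jj_surj[OF i] unfolding k_def by auto
        have "g \<le> nsmul k u" using n nsmul_mono_n[OF u0 jk(2)] by (rule order_trans)
        also have "\<dots> \<le> nsmul (Q i) (d k)" using dprop[of k] jk by simp
        also have "\<dots> \<le> nsmul (Q i) (r (Suc k) i)"
        proof (rule nsmul_mono)
          show "d k \<le> r (Suc k) i" unfolding rS using jk i r0[OF i, of k] by simp
        qed
        finally have "g \<le> nsmul (\<Prod>j=1..i. q j) (r (Suc k) i)" unfolding Q_def .
        moreover have "r (Suc k) i \<in> X i" unfolding X_def using r0[OF i] by blast
        ultimately show "\<exists>s\<in>X i. g \<le> nsmul (\<Prod>j=1..i. q j) s" by blast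
      qed
      moreover have "1 \<le> (\<Prod>j=1..i. q j)" using False by linarith
      ultimately show ?thesis using interval_mult_eq_pos[OF XI] by blast
    qed
  qed
qed

end
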